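(* Let $T>0$, let $h:(0,\infty)\to(0,\infty)$ be bounded with $\lim_{u\to0^+}h(u)=\lim_{u\to+\infty}h(u)=0$, and let $A\in C^1([0,T]\times(0,1)^n;\mathbb S(n))$ satisfy $|A_{ij}(s,\mu)|\le(\mu^i+\mu^j)h(\mu^j/\mu^i)$ for all $(i,j)\in\mathbb E$ and $(s,\mu)\in[0,T]\times(0,1)^n$. There exists a constant $K>1$, depending only on $n$, $\omega_{\min}$, $\omega_{\max}$ and $h$, such that the following holds. Let $\epsilon>0$, $\mu\in\mathcal P_\epsilon(\mathbb G)$, $t_0\in(0,T]$, and let $\rho\in C^1([0,t_0];(0,1)^n)$ be a classical solution of $\dot\rho(s)=\nabla_{\mathbb G}\cdot A(s,\rho(s))+\Delta_{\mathbb G}\rho(s)$, $\rho(0)=\mu$. If $\delta\in(0,\epsilon/K)$, $i_0\in\{1,\dots,n\}$, and $t_0$ is the first time such that $\rho_{i_0}(t_0)=\delta$, then $$\min_{s\in[0,t_0]}\rho_i(s)\le K\delta\qquad\text{for all }i\in\{1,\dots,n\}.$$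
   Context: $\mathbb G=(\mathbb V,\mathbb E,\omega)$: finite, connected, simple undirected graph, $\mathbb V=\{1,\dots,n\}$, edges ordered pairs with $(i,j)\in\mathbb E\iff(j,i)\in\mathbb E$, symmetric weights $\omega_{ij}>0$ iff $(i,j)\in\mathbb E$; $\omega_{\min},\omega_{\max}$ the min/max edge weights. $\mathbb S(n)$: skew-symmetric $n\times n$ matrices. $(\nabla_{\mathbb G}\cdot m)^i=\sum_{j\ne i}\sqrt{\omega_{ij}}m^{ji}$; $(\Delta_{\mathbb G}u)^i=\sum_j\omega_{ij}(u^j-u^i)$. $\mathcal P_\epsilon(\mathbb G)$: probability vectors in $\mathbb R^n$ with all entries $>\epsilon$. $\rho_i$ denotes the $i$-th component. *)

theory Defs
  imports "HOL-Analysis.Analysis"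
begin

text \<open>Vertices of the graph are the elements of a finite type 'n (so n = CARD('n)).
  Edge weights are w :: 'n => 'n => real, with w i j > 0 iff (i,j) is an edge.\<close>

definition weighted_graph :: "('n::finite \<Rightarrow> 'n \<Rightarrow> real) \<Rightarrow> bool" where
  "weighted_graph w \<longleftrightarrow>
     (\<forall>i j. w i j \<ge> 0) \<and> (\<forall>i j. w i j = w j i) \<and> (\<forall>i. w i i = 0) \<and>
     (\<forall>i j. (\<lambda>a b. w a b > 0)\<^sup>*\<^sup>* i j)"

definition edge_weights :: "('n::finite \<Rightarrow> 'n \<Rightarrow> real) \<Rightarrow> real set" where
  "edge_weights w = {w i j | i j. w i j > 0}"

definition omega_min :: "('n::finite \<Rightarrow> 'n \<Rightarrow> real) \<Rightarrow> real" where
  "omega_min w = Min (edge_weights w)"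

definition omega_max :: "('n::finite \<Rightarrow> 'n \<Rightarrow> real) \<Rightarrow> real" where
  "omega_max w = Max (edge_weights w)"

definition graph_div :: "('n::finite \<Rightarrow> 'n \<Rightarrow> real) \<Rightarrow> real^'n^'n \<Rightarrow> real^'n" where
  "graph_div w m = (\<chi> i. \<Sum>j\<in>UNIV - {i}. sqrt (w i j) * m $ j $ i)"

definition graph_lap :: "('n::finite \<Rightarrow> 'n \<Rightarrow> real) \<Rightarrow> real^'n \<Rightarrow> real^'n" where
  "graph_lap w u = (\<chi> i. \<Sum>j\<in>UNIV. w i j * (u $ j - u $ i))"

definition P_eps :: "real \<Rightarrow> (real^'n::finite) set" where
  "P_eps eps = {x. (\<Sum>i\<in>UNIV. x $ i) = 1 \<and> (\<forall>i. x $ i > eps)}"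

definition open_cube :: "(real^'n::finite) set" where
  "open_cube = {x. \<forall>i. 0 < x $ i \<and> x $ i < 1}"

definition C1_on :: "'a::real_normed_vector set \<Rightarrow> ('a \<Rightarrow> 'b::real_normed_vector) \<Rightarrow> bool" where
  "C1_on S f \<longleftrightarrow> (\<exists>f'. (\<forall>x\<in>S. (f has_derivative blinfun_apply (f' x)) (at x within S))
                        \<and> continuous_on S f')"

end

theory Submission
  imports Defs
begin

lemma hit_deriv_nonpos:
  fixes f :: "real \<Rightarrow> real"
  assumes d: "(f has_real_derivative D) (at s within {0..t0})" and s: "0 < s" "s \<le> t0"
    and gt: "\<forall>u\<in>{0..<s}. f u > f s"
  shows "D \<le> 0"
proof -
  have "(f has_real_derivative D) (at s within {0..s})"
    using d s by (auto intro: has_field_derivative_subset)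
  then have "(f has_real_derivative D) (at_left s)"
    using s by (simp add: at_within_Icc_at_left)
  then have lim: "((\<lambda>y. (f y - f s) / (y - s)) \<longlongrightarrow> D) (at_left s)"
    using has_field_derivative_iff by blast
  have ev: "eventually (\<lambda>y. (f y - f s) / (y - s) \<le> 0) (at_left s)"
    using eventually_at_left_real[OF s(1)]
  proof (rule eventually_mono)
    fix y assume "y \<in> {0<..<s}"
    then have "f y - f s > 0" "y - s < 0" using gt by auto
    then show "(f y - f s) / (y - s) \<le> 0" by (simp add: divide_pos_neg less_imp_le)
  qed
  show ?thesis using tendsto_upperbound[OF lim ev] by simp
qed

lemma first_hit:
  fixes f :: "real \<Rightarrow> real"
  assumes cont: "continuous_on {0..t0} f" and s1: "s1 \<in> {0..t0}" "f s1 \<le> c" and f0: "f 0 > c"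
  shows "\<exists>s\<in>{0<..t0}. f s = c \<and> (\<forall>u\<in>{0..<s}. f u > c)"
proof -
  define Z where "Z = {0..s1} \<inter> f -` {..c}"
  have cl: "closed Z" unfolding Z_def
    by (rule continuous_closed_preimage) (use cont s1 in \<open>auto intro: continuous_on_subset\<close>)
  have ne: "Z \<noteq> {}" using s1 by (auto simp: Z_def)
  have bb: "bdd_below Z" by (auto simp: Z_def bdd_below_def)
  define s where "s = Inf Z"
  have sZ: "s \<in> Z" using closed_contains_Inf[OF ne bb cl] s_def by simp
  have low: "\<forall>u\<in>{0..<s}. f u > c"
  proof
    fix u assume u: "u \<in> {0..<s}"
    have "u \<notin> Z" using cInf_lower[OF _ bb, of u] u s_def by force
    moreover have "u \<le> s1" using u sZ by (auto simp: Z_def)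
    ultimately show "f u > c" using u by (auto simp: Z_def)
  qed
  have s0: "0 \<le> s" "s \<le> s1" "f s \<le> c" using sZ by (auto simp: Z_def)
  have "continuous_on {0..s} f" using cont s0 s1 by (auto intro: continuous_on_subset)
  then obtain x where x: "0 \<le> x" "x \<le> s" "f x = c"
    using IVT2'[of f s c 0] s0 f0 by auto
  have "x = s" using low x by force
  with x have "f s = c" by simp
  moreover have "s \<noteq> 0" using \<open>f s = c\<close> f0 by auto
  ultimately show ?thesis using low s0 s1 by auto
qed

lemma term_lower:
  fixes w a x M d wmin wmax :: real and h :: "real \<Rightarrow> real"
  assumes wmin: "wmin > 0" and M: "M \<ge> 0" and d: "d > 0"
    and hM: "\<forall>u>0. h u \<le> M" and hd: "\<forall>u. 0 < u \<and> u < d \<longrightarrow> h u \<le> sqrt wmin / 4"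
    and w: "wmin \<le> w" "w \<le> wmax" and x: "x > 0" and a: "\<bar>a\<bar> \<le> (x + 1) * h (1 / x)"
  shows "- (wmax + sqrt wmax * (max 2 (2/d) + 1) * M) \<le> sqrt w * a + w * (x - 1)"
    and "x \<ge> max 2 (2/d) \<Longrightarrow> wmin * (3 * x - 5) / 4 \<le> sqrt w * a + w * (x - 1)"
proof -
  define X0 where "X0 = max 2 (2/d)"
  have w0: "w > 0" using w wmin by linarith
  have sa: "sqrt w * a \<ge> - (sqrt w * ((x + 1) * h (1 / x)))"
  proof -
    have "sqrt w * \<bar>a\<bar> \<le> sqrt w * ((x + 1) * h (1 / x))" using a w0 by (intro mult_left_mono) auto
    moreover have "- (sqrt w * \<bar>a\<bar>) \<le> sqrt w * a" using w0 by (simp add: abs_if)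
    ultimately show ?thesis by linarith
  qed
  have big: "wmin * (3 * x - 5) / 4 \<le> sqrt w * a + w * (x - 1)" if xb: "x \<ge> X0"
  proof -
    have "2/d \<le> x" using xb by (simp add: X0_def)
    then have "1/x \<le> d/2" using x d by (simp add: field_simps)
    then have "h (1/x) \<le> sqrt wmin / 4" using hd x d by auto
    then have "(x + 1) * h (1 / x) \<le> (x + 1) * (sqrt wmin / 4)" using x by (simp add: mult_left_mono)
    then have "sqrt w * ((x + 1) * h (1 / x)) \<le> sqrt w * ((x + 1) * (sqrt wmin / 4))"
      by (rule mult_left_mono) (use w0 in auto)
    also have "\<dots> = (x + 1) / 4 * (sqrt w * sqrt wmin)" by (simp add: algebra_simps)
    also have "\<dots> \<le> (x + 1) / 4 * w"
    proof -
      have "sqrt w * sqrt wmin \<le> sqrt w * sqrt w" by (rule mult_left_mono) (use w wmin in auto)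
      also have "\<dots> = w" using w0 by simp
      finally show ?thesis using x by (simp add: mult_left_mono)
    qed
    finally have "sqrt w * a + w * (x - 1) \<ge> w * (x - 1) - (x + 1) / 4 * w" using sa by linarith
    moreover have "w * (x - 1) - (x + 1) / 4 * w = w * (3 * x - 5) / 4" by (simp add: algebra_simps)
    moreover have "wmin * (3 * x - 5) \<le> w * (3 * x - 5)"
      using w xb by (intro mult_right_mono) (auto simp: X0_def)
    ultimately show ?thesis by linarith
  qed
  then show "x \<ge> max 2 (2/d) \<Longrightarrow> wmin * (3 * x - 5) / 4 \<le> sqrt w * a + w * (x - 1)"
    by (simp add: X0_def)
  show "- (wmax + sqrt wmax * (max 2 (2/d) + 1) * M) \<le> sqrt w * a + w * (x - 1)"
  proof (cases "x \<ge> X0")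
    case True
    have "X0 \<ge> 2" by (simp add: X0_def)
    have "0 \<le> wmin * (3 * x - 5) / 4" using True \<open>X0 \<ge> 2\<close> wmin by simp
    moreover have "0 \<le> wmax + sqrt wmax * (max 2 (2/d) + 1) * M" using w wmin M by simp
    ultimately show ?thesis using big[OF True] by linarith
  next
    case False
    have "h (1/x) \<le> M" using hM x by simp
    then have "(x + 1) * h (1 / x) \<le> (x + 1) * M" using x by (simp add: mult_left_mono)
    also have "\<dots> \<le> (X0 + 1) * M" using False M by (simp add: mult_right_mono)
    finally have "sqrt w * ((x + 1) * h (1 / x)) \<le> sqrt w * ((X0 + 1) * M)" by (rule mult_left_mono) (use w0 in auto)
    also have "\<dots> \<le> sqrt wmax * ((X0 + 1) * M)"
      using w M by (intro mult_right_mono) (auto simp: X0_def)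
    finally have 1: "sqrt w * a \<ge> - (sqrt wmax * (X0 + 1) * M)" using sa by (simp add: mult.assoc)
    have "w * (x - 1) \<ge> - w" using x w0 by (simp add: algebra_simps)
    then show ?thesis using 1 w by (simp add: X0_def)
  qed
qed


lemma step_ineq:
  fixes wv a x :: "'n::finite \<Rightarrow> real" and k j :: 'n and h :: "real \<Rightarrow> real"
  assumes wmin: "wmin > 0" and M: "M \<ge> 0" and d: "d > 0"
    and hM: "\<forall>u>0. h u \<le> M" and hd: "\<forall>u. 0 < u \<and> u < d \<longrightarrow> h u \<le> sqrt wmin / 4"
    and wv: "\<forall>i. wv i = 0 \<or> (wmin \<le> wv i \<and> wv i \<le> wmax)"
    and ab: "\<forall>i. wv i > 0 \<longrightarrow> x i > 0 \<and> \<bar>a i\<bar> \<le> (x i + 1) * h (1 / x i)"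
    and sum: "(\<Sum>i\<in>UNIV-{k}. sqrt (wv i) * a i + wv i * (x i - 1)) \<le> 0"
    and j: "wv j > 0" "j \<noteq> k"
  shows "x j \<le> max (max 2 (2/d))
     ((4 * real CARD('n) * (wmax + sqrt wmax * (max 2 (2/d) + 1) * M) / wmin + 5) / 3)"
proof -
  define C where "C = wmax + sqrt wmax * (max 2 (2/d) + 1) * M"
  define t where "t i = sqrt (wv i) * a i + wv i * (x i - 1)" for i
  have wmaxpos: "wmax > 0" using wv j wmin by (metis less_le_trans not_less_iff_gr_or_eq)
  have C0: "C \<ge> 0" using wmaxpos M by (simp add: C_def)
  have lowt: "- C \<le> t i" for i
  proof (cases "wv i = 0")
    case True then show ?thesis using C0 by (simp add: t_def)
  next
    case False
    then have "wmin \<le> wv i" "wv i \<le> wmax" using wv by auto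
    moreover have "wv i > 0" using calculation wmin by linarith
    ultimately show ?thesis unfolding C_def t_def
      using term_lower(1)[OF wmin M d hM hd, of "wv i" wmax "x i" "a i"] ab by auto
  qed
  have split: "(\<Sum>i\<in>UNIV-{k}. t i) = t j + (\<Sum>i\<in>UNIV-{k}-{j}. t i)"
    using j by (subst sum.remove[of _ j]) auto
  have "(\<Sum>i\<in>UNIV-{k}-{j}. t i) \<ge> (\<Sum>i\<in>UNIV-{k}-{j}. - C)"
    by (rule sum_mono) (use lowt in auto)
  also have "(\<Sum>i\<in>UNIV-{k}-{j}. - C) = - (real (card (UNIV-{k}-{j})) * C)" by simp
  also have "\<dots> \<ge> - (real CARD('n) * C)"
  proof -
    have "card (UNIV-{k}-{j}) \<le> CARD('n)" by (rule card_mono) auto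
    then show ?thesis using C0 by (simp add: mult_right_mono)
  qed
  finally have tj: "t j \<le> real CARD('n) * C" using split sum by (simp add: t_def)
  show ?thesis
  proof (cases "x j \<ge> max 2 (2/d)")
    case True
    have wj: "wmin \<le> wv j" "wv j \<le> wmax" using wv j by (metis less_irrefl)+
    have "wmin * (3 * x j - 5) / 4 \<le> t j"
      unfolding t_def using term_lower(2)[OF wmin M d hM hd wj, of "x j" "a j"] ab j True by auto
    with tj have "wmin * (3 * x j - 5) \<le> 4 * real CARD('n) * C" by linarith
    then have "3 * x j - 5 \<le> 4 * real CARD('n) * C / wmin" using wmin by (simp add: field_simps)
    then have "x j \<le> (4 * real CARD('n) * C / wmin + 5) / 3" by simp
    then show ?thesis unfolding C_def by (metis max.coboundedI2)
  next
    case False then show ?thesis by (metis max.coboundedI1 nle_le)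
  qed
qed


lemma bounded_path:
  fixes R :: "'n::finite \<Rightarrow> 'n \<Rightarrow> bool"
  assumes "R\<^sup>*\<^sup>* a b" shows "\<exists>m \<le> CARD('n \<times> 'n). (R^^m) a b"
proof -
  let ?S = "{(x,y). R x y}"
  have "(a,b) \<in> ?S\<^sup>*" using assms rtranclp_rtrancl_eq by metis
  then obtain m where m: "m \<le> card ?S" "(a,b) \<in> ?S^^m"
    using rtrancl_finite_eq_relpow[of ?S] by auto
  moreover have "card ?S \<le> CARD('n\<times>'n)" by (rule card_mono) auto
  moreover have "(R^^m) a b"
  proof -
    have "((\<lambda>x y. (x,y) \<in> ?S)^^m) a b" using relpowp_relpow_eq[where R="?S" and n=m] m(2) by simp
    then show ?thesis by simp
  qed
  ultimately show ?thesis using le_trans by blast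
qed

theorem lemma2p1:
  fixes h :: "real \<Rightarrow> real" and wmin wmax :: real
  assumes h_pos: "\<forall>u>0. h u > 0"
    and h_bdd: "\<exists>M. \<forall>u>0. h u \<le> M"
    and h_lim0: "(h \<longlongrightarrow> 0) (at_right 0)"
    and h_liminf: "(h \<longlongrightarrow> 0) at_top"
  shows "\<exists>K>1. \<forall>(w :: 'n::finite \<Rightarrow> 'n \<Rightarrow> real) (T::real)
            (A :: real \<times> (real^'n) \<Rightarrow> real^'n^'n) (eps::real) (mu :: real^'n) (t0::real)
            (rho :: real \<Rightarrow> real^'n) (delta::real) (i0::'n).
      weighted_graph w \<and> omega_min w = wmin \<and> omega_max w = wmax \<and>
      T > 0 \<and>
      C1_on ({0..T} \<times> open_cube) A \<and>
      (\<forall>x \<in> {0..T} \<times> open_cube. transpose (A x) = - A x) \<and>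
      (\<forall>i j. w i j > 0 \<longrightarrow> (\<forall>s\<in>{0..T}. \<forall>m\<in>open_cube.
          \<bar>A (s, m) $ i $ j\<bar> \<le> (m $ i + m $ j) * h (m $ j / m $ i))) \<and>
      eps > 0 \<and> mu \<in> P_eps eps \<and> t0 \<in> {0<..T} \<and>
      C1_on {0..t0} rho \<and> (\<forall>s\<in>{0..t0}. rho s \<in> open_cube) \<and>
      (\<forall>s\<in>{0..t0}. (rho has_vector_derivative
          (graph_div w (A (s, rho s)) + graph_lap w (rho s))) (at s within {0..t0})) \<and>
      rho 0 = mu \<and>
      delta \<in> {0<..<eps / K} \<and>
      rho t0 $ i0 = delta \<and> (\<forall>s\<in>{0..<t0}. rho s $ i0 \<noteq> delta)
      \<longrightarrow> (\<forall>i. Inf ((\<lambda>s. rho s $ i) ` {0..t0}) \<le> K * delta)"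
proof -
  obtain M0 where M0: "\<forall>u>0. h u \<le> M0" using h_bdd by auto
  define M where "M = max M0 0"
  have M: "M \<ge> 0" "\<forall>u>0. h u \<le> M" using M0 by (auto simp: M_def intro: max.coboundedI1)
  obtain d where d: "d > 0" and hd: "wmin > 0 \<longrightarrow> (\<forall>u. 0 < u \<and> u < d \<longrightarrow> h u \<le> sqrt wmin / 4)"
  proof (cases "wmin > 0")
    case True
    then have "sqrt wmin / 4 > 0" by simp
    from order_tendstoD(2)[OF h_lim0 this]
    obtain b where "b > 0" "\<forall>y>0. y < b \<longrightarrow> h y < sqrt wmin / 4"
      unfolding eventually_at_right_field by auto
    then show ?thesis using that[of b] by fastforce
  next
    case False then show ?thesis using that[of 1] by auto
  qed
  define L where "L = max (max 2 (2/d))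
     ((4 * real CARD('n) * (wmax + sqrt wmax * (max 2 (2/d) + 1) * M) / wmin + 5) / 3)"
  have L2: "L \<ge> 2" by (simp add: L_def)
  define B where "B = CARD('n \<times> 'n)"
  have B1: "B \<ge> 1" unfolding B_def by (simp add: Suc_leI)
  define K where "K = L ^ B"
  have "L ^ 1 \<le> L ^ B" using L2 B1 by (intro power_increasing) auto
  then have K1: "K > 1" using L2 by (simp add: K_def)
  show ?thesis
  proof (rule exI[of _ K], intro conjI K1 allI impI)
    fix w :: "'n \<Rightarrow> 'n \<Rightarrow> real" and T :: real and A :: "real \<times> (real^'n) \<Rightarrow> real^'n^'n"
      and eps :: real and mu :: "real^'n" and t0 :: real and rho :: "real \<Rightarrow> real^'n"
      and delta :: real and i0 :: 'n and i :: 'n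
    assume H: "weighted_graph w \<and> omega_min w = wmin \<and> omega_max w = wmax \<and>
      T > 0 \<and>
      C1_on ({0..T} \<times> open_cube) A \<and>
      (\<forall>x \<in> {0..T} \<times> open_cube. transpose (A x) = - A x) \<and>
      (\<forall>i j. w i j > 0 \<longrightarrow> (\<forall>s\<in>{0..T}. \<forall>m\<in>open_cube.
          \<bar>A (s, m) $ i $ j\<bar> \<le> (m $ i + m $ j) * h (m $ j / m $ i))) \<and>
      eps > 0 \<and> mu \<in> P_eps eps \<and> t0 \<in> {0<..T} \<and>
      C1_on {0..t0} rho \<and> (\<forall>s\<in>{0..t0}. rho s \<in> open_cube) \<and>
      (\<forall>s\<in>{0..t0}. (rho has_vector_derivative
          (graph_div w (A (s, rho s)) + graph_lap w (rho s))) (at s within {0..t0})) \<and>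
      rho 0 = mu \<and>
      delta \<in> {0<..<eps / K} \<and>
      rho t0 $ i0 = delta \<and> (\<forall>s\<in>{0..<t0}. rho s $ i0 \<noteq> delta)"
    then have wg: "weighted_graph w" and wminE: "omega_min w = wmin" and wmaxE: "omega_max w = wmax"
      and Abd: "\<forall>i j. w i j > 0 \<longrightarrow> (\<forall>s\<in>{0..T}. \<forall>m\<in>open_cube.
          \<bar>A (s, m) $ i $ j\<bar> \<le> (m $ i + m $ j) * h (m $ j / m $ i))"
      and eps: "eps > 0" and mu: "mu \<in> P_eps eps" and t0: "t0 \<in> {0<..T}"
      and C1: "C1_on {0..t0} rho" and cube: "\<forall>s\<in>{0..t0}. rho s \<in> open_cube"
      and der: "\<forall>s\<in>{0..t0}. (rho has_vector_derivative
          (graph_div w (A (s, rho s)) + graph_lap w (rho s))) (at s within {0..t0})"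
      and rho0: "rho 0 = mu" and delta: "delta \<in> {0<..<eps / K}" and hit: "rho t0 $ i0 = delta"
      by auto
    have wnn: "\<And>a b. w a b \<ge> 0" and wsym: "\<And>a b. w a b = w b a" and wdiag: "\<And>a. w a a = 0"
      and conn: "\<And>a b. (\<lambda>a b. w a b > 0)\<^sup>*\<^sup>* a b"
      using wg by (auto simp: weighted_graph_def)
    have finE: "finite (edge_weights w)"
    proof -
      have "edge_weights w \<subseteq> (\<lambda>(a,b). w a b) ` UNIV" by (auto simp: edge_weights_def)
      then show ?thesis by (rule finite_subset) simp
    qed
    have edge_bounds: "wmin > 0 \<and> wmin \<le> w a b \<and> w a b \<le> wmax" if "w a b > 0" for a b
    proof -
      have inE: "w a b \<in> edge_weights w" using that by (auto simp: edge_weights_def)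
      then have ne: "edge_weights w \<noteq> {}" by auto
      have "Min (edge_weights w) \<in> edge_weights w" using Min_in[OF finE ne] .
      then have "Min (edge_weights w) > 0" by (auto simp: edge_weights_def)
      moreover have "Min (edge_weights w) \<le> w a b" using Min_le[OF finE inE] .
      moreover have "w a b \<le> Max (edge_weights w)" using Max_ge[OF finE inE] .
      ultimately show ?thesis using wminE wmaxE by (simp add: omega_min_def omega_max_def)
    qed
    have cont: "continuous_on {0..t0} (\<lambda>s. rho s $ k)" for k
    proof -
      obtain f' where "\<forall>x\<in>{0..t0}. (rho has_derivative blinfun_apply (f' x)) (at x within {0..t0})"
        using C1 unfolding C1_on_def by blast
      then have "continuous_on {0..t0} rho" by (intro has_derivative_continuous_on) auto
      then show ?thesis by (rule continuous_on_component)
    qed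
    have derk: "((\<lambda>s. rho s $ k) has_real_derivative
        (\<Sum>j\<in>UNIV - {k}. sqrt (w k j) * A (s, rho s) $ j $ k) + (\<Sum>j\<in>UNIV. w k j * (rho s $ j - rho s $ k)))
        (at s within {0..t0})" if "s \<in> {0..t0}" for k s
    proof -
      have "((\<lambda>s. rho s $ k) has_vector_derivative
          (graph_div w (A (s, rho s)) + graph_lap w (rho s)) $ k) (at s within {0..t0})"
        using bounded_linear.has_vector_derivative[OF bounded_linear_vec_nth der[rule_format, OF that]] .
      then show ?thesis
        by (simp add: has_real_derivative_iff_has_vector_derivative graph_div_def graph_lap_def)
    qed
    have mu_gt: "rho 0 $ k > eps" for k using mu rho0 by (auto simp: P_eps_def)
    have nbr: "\<exists>s\<in>{0..t0}. rho s $ j \<le> L * c"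
      if s1: "s1 \<in> {0..t0}" "rho s1 $ k \<le> c" and c: "0 < c" "c < eps" and e: "w k j > 0" for k j c s1
    proof -
      obtain s where s: "s \<in> {0<..t0}" "rho s $ k = c" "\<forall>u\<in>{0..<s}. rho u $ k > c"
        using first_hit[OF cont s1] mu_gt[of k] c by auto
      define D where "D = (\<Sum>j\<in>UNIV - {k}. sqrt (w k j) * A (s, rho s) $ j $ k)
          + (\<Sum>j\<in>UNIV. w k j * (rho s $ j - rho s $ k))"
      have sI: "s \<in> {0..t0}" using s by auto
      have "D \<le> 0"
        using hit_deriv_nonpos[OF derk[OF sI, of k, folded D_def]] s by auto
      have eb: "wmin > 0" using edge_bounds[OF e] by simp
      have rpos: "\<And>i. rho s $ i > 0" using cube sI by (auto simp: open_cube_def)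
      define a where "a i = A (s, rho s) $ i $ k / c" for i
      define x where "x i = rho s $ i / c" for i
      have sum1: "(\<Sum>j\<in>UNIV. w k j * (rho s $ j - rho s $ k)) = (\<Sum>j\<in>UNIV-{k}. w k j * (rho s $ j - rho s $ k))"
        by (rule sum.mono_neutral_right) (auto simp: wdiag)
      have "(\<Sum>i\<in>UNIV-{k}. sqrt (w k i) * a i + w k i * (x i - 1)) = D / c"
        unfolding D_def sum1 add_divide_distrib sum_divide_distrib sum.distrib[symmetric]
        using c s(2) by (intro sum.cong refl) (simp add: a_def x_def field_simps)
      also have "\<dots> \<le> 0" using \<open>D \<le> 0\<close> c by (simp add: divide_nonpos_pos)
      finally have sumle: "(\<Sum>i\<in>UNIV-{k}. sqrt (w k i) * a i + w k i * (x i - 1)) \<le> 0" .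
      have wv: "\<forall>i. w k i = 0 \<or> (wmin \<le> w k i \<and> w k i \<le> wmax)"
        using edge_bounds wnn by (metis less_eq_real_def)
      have ab: "\<forall>i. w k i > 0 \<longrightarrow> x i > 0 \<and> \<bar>a i\<bar> \<le> (x i + 1) * h (1 / x i)"
      proof (intro allI impI conjI)
        fix i assume wi: "w k i > 0"
        show "x i > 0" using rpos c by (simp add: x_def)
        have "w i k > 0" using wi wsym by simp
        then have "\<bar>A (s, rho s) $ i $ k\<bar> \<le> (rho s $ i + rho s $ k) * h (rho s $ k / rho s $ i)"
          using Abd t0 s cube by auto
        then have "\<bar>A (s, rho s) $ i $ k\<bar> / c \<le> (rho s $ i + c) * h (c / rho s $ i) / c"
          using c s(2) by (simp add: divide_right_mono)
        moreover have "(rho s $ i + c) * h (c / rho s $ i) / c = (x i + 1) * h (1 / x i)"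
          using c by (simp add: x_def field_simps)
        ultimately show "\<bar>a i\<bar> \<le> (x i + 1) * h (1 / x i)" using c by (simp add: a_def)
      qed
      have jk: "j \<noteq> k" using e wdiag by auto
      have "x j \<le> L"
        unfolding L_def
        by (rule step_ineq[OF eb M(1) d M(2) _ wv ab sumle e jk]) (use hd eb in auto)
      then have "rho s $ j \<le> L * c" using c by (simp add: x_def field_simps)
      then show ?thesis using sI by auto
    qed
    have ind: "\<forall>k. ((\<lambda>a b. w a b > 0)^^m) i0 k \<longrightarrow> L^m * delta < eps \<longrightarrow>
        (\<exists>s\<in>{0..t0}. rho s $ k \<le> L^m * delta)" for m
    proof (induction m)
      case 0
      then show ?case using hit t0 by force
    next
      case (Suc m)
      show ?case
      proof (intro allI impI)
        fix k assume p: "((\<lambda>a b. w a b > 0)^^(Suc m)) i0 k" and lt: "L^(Suc m) * delta < eps"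
        then obtain y where y: "((\<lambda>a b. w a b > 0)^^m) i0 y" "w y k > 0" by auto
        have dpos: "delta > 0" using delta by simp
        have "L^m * delta \<le> L^(Suc m) * delta"
          using L2 dpos by (intro mult_right_mono) (auto intro: power_increasing)
        then have lt2: "L^m * delta < eps" using lt by linarith
        obtain s1 where s1: "s1 \<in> {0..t0}" "rho s1 $ y \<le> L^m * delta" using Suc y(1) lt2 by blast
        have "L^m * delta > 0" using L2 dpos by simp
        from nbr[OF s1 this lt2 y(2)] show "\<exists>s\<in>{0..t0}. rho s $ k \<le> L ^ Suc m * delta"
          by (simp add: mult.assoc)
      qed
    qed
    obtain m where m: "m \<le> B" "((\<lambda>a b. w a b > 0)^^m) i0 i"
      using bounded_path[OF conn[of i0 i]] unfolding B_def by blast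
    have dpos: "delta > 0" using delta by simp
    have "L^m \<le> K" unfolding K_def using L2 m(1) by (intro power_increasing) auto
    then have LmK: "L^m * delta \<le> K * delta" using dpos by (simp add: mult_right_mono)
    have "K * delta < eps" using delta K1 by (simp add: field_simps)
    then obtain s where s: "s \<in> {0..t0}" "rho s $ i \<le> L^m * delta"
      using ind[of m] m LmK by force
    have bdd: "bdd_below ((\<lambda>s. rho s $ i) ` {0..t0})"
      using cube by (auto simp: open_cube_def bdd_below_def intro!: exI[of _ 0] less_imp_le)
    have "Inf ((\<lambda>s. rho s $ i) ` {0..t0}) \<le> rho s $ i"
      using s(1) bdd by (auto intro: cInf_lower)
    then show "Inf ((\<lambda>s. rho s $ i) ` {0..t0}) \<le> K * delta" using s(2) LmK by linarith
  qed
qed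

end
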